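(* Let $m\ge2$, $\lambda\in\mathbb{D}$, $\mathcal{D}=\{d_1,\ldots,d_m\}\subset\mathbb{C}$, and let $E=\{\sum_{n=0}^\infty a_n\lambda^n:a_n\in\mathcal{D}\}$ be the attractor of the IFS $\{f_j(z)=\lambda z+d_j\}_{j=1}^m$. Assume $E$ is connected and the overlap set $\mathcal{O}=\bigcup_{i\ne j}(E_i\cap E_j)$, $E_j=f_j(E)$, is finite. Suppose in addition there exists $C_1>0$ such that for all sufficiently large $n\in\mathbb{N}$: whenever $f\in\mathcal{F}$, $g\in\mathcal{B}$ and $|f\wedge g|=n$, then $|g(\lambda)|\ge C_1|\lambda|^n$. Then $E$ has bounded turning.
   Context: $\mathcal{B}$ is the set of power series $f(z)=\sum_{n\ge0}c_nz^n$ with $c_n\in\mathcal{D}-\mathcal{D}=\{d_i-d_j\}$ for all $n$ and $c_0\ne0$; $\mathcal{F}=\{f\in\mathcal{B}:f(\lambda)=0\}$. For power series $f,g$, $|f\wedge g|=\min\{k\ge0: f^{(k+1)}(0)\ne g^{(k+1)}(0)\}$ (the degree of their maximal common initial part). A connected set $X\subset\mathbb{C}$ has bounded turning if there is $L$ such that for all $z_0,z_1\in X$ there is a connected set $[z_0,z_1]\subset X$ containing $z_0,z_1$ with $\operatorname{diam}[z_0,z_1]\le L|z_0-z_1|$. *)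

theory Defs
  imports "HOL-Analysis.Analysis" "HOL-Library.Extended_Nat"
begin

definition attractor :: "complex \<Rightarrow> complex set \<Rightarrow> complex set" where
  "attractor lam D = {(\<Sum>n. a n * lam ^ n) | a. \<forall>n. a n \<in> D}"

definition piece :: "complex \<Rightarrow> complex set \<Rightarrow> complex \<Rightarrow> complex set" where
  "piece lam D d = (\<lambda>z. lam * z + d) ` attractor lam D"

definition overlap_set :: "complex \<Rightarrow> complex set \<Rightarrow> complex set" where
  "overlap_set lam D = (\<Union>d\<in>D. \<Union>d'\<in>D - {d}. piece lam D d \<inter> piece lam D d')"

text \<open>Power series are represented by their coefficient sequences.
  The class B: coefficients in D - D, nonzero constant term.\<close>
definition classB :: "complex set \<Rightarrow> (nat \<Rightarrow> complex) set" where
  "classB D = {c. (\<forall>n. c n \<in> {x - y | x y. x \<in> D \<and> y \<in> D}) \<and> c 0 \<noteq> 0}"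

definition ps_eval :: "(nat \<Rightarrow> complex) \<Rightarrow> complex \<Rightarrow> complex" where
  "ps_eval c z = (\<Sum>n. c n * z ^ n)"

definition classF :: "complex \<Rightarrow> complex set \<Rightarrow> (nat \<Rightarrow> complex) set" where
  "classF lam D = {c \<in> classB D. ps_eval c lam = 0}"

text \<open>|f \<and> g| = min{k \<ge> 0 : f^(k+1)(0) \<noteq> g^(k+1)(0)}; since f^(k+1)(0) = (k+1)! c_(k+1),
  this is the least k with c_(k+1) \<noteq> c'_(k+1); infinity if no such k exists.\<close>
definition common_deg :: "(nat \<Rightarrow> complex) \<Rightarrow> (nat \<Rightarrow> complex) \<Rightarrow> enat" where
  "common_deg c c' = (if \<exists>k. c (Suc k) \<noteq> c' (Suc k)
     then enat (LEAST k. c (Suc k) \<noteq> c' (Suc k)) else \<infinity>)"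

definition bounded_turning :: "complex set \<Rightarrow> bool" where
  "bounded_turning X \<longleftrightarrow> connected X \<and>
     (\<exists>L. \<forall>z0\<in>X. \<forall>z1\<in>X. \<exists>C. C \<subseteq> X \<and> connected C \<and> z0 \<in> C \<and> z1 \<in> C \<and>
        diameter C \<le> L * dist z0 z1)"

end

theory Submission
  imports Defs
begin


definition Sig :: "complex set \<Rightarrow> (nat \<Rightarrow> complex) set" where
  "Sig D = {a. \<forall>n. a n \<in> D}"

definition pif :: "complex \<Rightarrow> (nat \<Rightarrow> complex) \<Rightarrow> complex" where
  "pif lam a = (\<Sum>n. a n * lam ^ n)"

definition Mb :: "complex set \<Rightarrow> real" where
  "Mb D = Max (insert 0 (norm ` D))"

lemma Mb_ge: "finite D \<Longrightarrow> d \<in> D \<Longrightarrow> norm d \<le> Mb D"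
  unfolding Mb_def by (auto intro: Max_ge)

lemma Mb_nonneg: "finite D \<Longrightarrow> 0 \<le> Mb D"
  unfolding Mb_def by (auto intro: Max_ge)

lemma summ_norm:
  assumes "norm lam < 1" "finite D" "a \<in> Sig D"
  shows "summable (\<lambda>n. norm (a n * lam ^ n))"
proof (rule summable_comparison_test')
  show "summable (\<lambda>n. Mb D * norm lam ^ n)"
    using assms by (intro summable_mult summable_geometric) auto
  fix n
  have "a n \<in> D" using assms(3) by (simp add: Sig_def)
  then have "norm (a n) \<le> Mb D" using Mb_ge assms(2) by blast
  then show "norm (norm (a n * lam ^ n)) \<le> Mb D * norm lam ^ n"
    by (simp add: norm_mult norm_power mult_right_mono)
qed

lemma summ:
  assumes "norm lam < 1" "finite D" "a \<in> Sig D"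
  shows "summable (\<lambda>n. a n * lam ^ n)"
  by (rule summable_norm_cancel[OF summ_norm[OF assms]])

lemma pif_bound:
  assumes "norm lam < 1" "finite D" "a \<in> Sig D"
  shows "norm (pif lam a) \<le> Mb D / (1 - norm lam)"
proof -
  have "norm (pif lam a) \<le> (\<Sum>n. norm (a n * lam ^ n))"
    unfolding pif_def using summ_norm[OF assms] by (rule summable_norm)
  also have "\<dots> \<le> (\<Sum>n. Mb D * norm lam ^ n)"
  proof (rule suminf_le)
    fix n
    have "a n \<in> D" using assms(3) by (simp add: Sig_def)
    then have "norm (a n) \<le> Mb D" using Mb_ge assms(2) by blast
    then show "norm (a n * lam ^ n) \<le> Mb D * norm lam ^ n"
      by (simp add: norm_mult norm_power mult_right_mono)
    show "summable (\<lambda>n. norm (a n * lam ^ n))" using summ_norm[OF assms] .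
    show "summable (\<lambda>n. Mb D * norm lam ^ n)"
      using assms by (intro summable_mult summable_geometric) auto
  qed
  also have "\<dots> = Mb D / (1 - norm lam)"
    using assms by (simp add: suminf_mult suminf_geometric divide_simps)
  finally show ?thesis .
qed

lemma pif_tail:
  assumes "norm lam < 1" "finite D" "a \<in> Sig D"
  shows "pif lam a = (\<Sum>i<k. a i * lam ^ i) + lam ^ k * pif lam (\<lambda>i. a (i + k))"
proof -
  have s: "summable (\<lambda>i. a (i + k) * lam ^ i)"
    using summ[OF assms(1,2), of "\<lambda>i. a (i + k)"] assms(3) by (auto simp: Sig_def)
  have "pif lam a = (\<Sum>i. a (i + k) * lam ^ (i + k)) + (\<Sum>i<k. a i * lam ^ i)"
    unfolding pif_def using summ[OF assms] by (rule suminf_split_initial_segment)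
  also have "(\<Sum>i. a (i + k) * lam ^ (i + k)) = (\<Sum>i. lam ^ k * (a (i + k) * lam ^ i))"
    by (simp add: power_add mult_ac)
  also have "\<dots> = lam ^ k * pif lam (\<lambda>i. a (i + k))"
    unfolding pif_def using s by (rule suminf_mult)
  finally show ?thesis by simp
qed

lemma shift_Sig: "a \<in> Sig D \<Longrightarrow> (\<lambda>i. a (i + k)) \<in> Sig D"
  by (auto simp: Sig_def)

definition Kb :: "complex set \<Rightarrow> complex \<Rightarrow> real" where
  "Kb D lam = 2 * Mb D / (1 - norm lam)"

lemma pif_agree:
  assumes "norm lam < 1" "finite D" "x \<in> Sig D" "y \<in> Sig D" "\<forall>i<k. x i = y i"
  shows "norm (pif lam x - pif lam y) \<le> Kb D lam * norm lam ^ k"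
proof -
  have "pif lam x - pif lam y = lam ^ k * (pif lam (\<lambda>i. x (i + k)) - pif lam (\<lambda>i. y (i + k)))"
    using pif_tail[OF assms(1,2,3), of k] pif_tail[OF assms(1,2,4), of k] assms(5)
    by (simp add: algebra_simps)
  also have "norm \<dots> \<le> norm lam ^ k * Kb D lam"
  proof -
    have b1: "norm (pif lam (\<lambda>i. x (i + k))) \<le> Mb D / (1 - norm lam)"
      using pif_bound[OF assms(1,2) shift_Sig[OF assms(3)]] .
    have b2: "norm (pif lam (\<lambda>i. y (i + k))) \<le> Mb D / (1 - norm lam)"
      using pif_bound[OF assms(1,2) shift_Sig[OF assms(4)]] .
    have "norm (pif lam (\<lambda>i. x (i + k)) - pif lam (\<lambda>i. y (i + k))) \<le> Kb D lam"
      using norm_triangle_ineq4[of "pif lam (\<lambda>i. x (i + k))" "pif lam (\<lambda>i. y (i + k))"] b1 b2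
      unfolding Kb_def by linarith
    then show ?thesis unfolding norm_mult norm_power by (simp add: mult_left_mono)
  qed
  finally show ?thesis by (simp add: mult_ac)
qed



lemma attr_eq: "attractor lam D = pif lam ` Sig D"
  unfolding attractor_def pif_def Sig_def by auto

lemma Sig_PiE: "Sig D = PiE UNIV (\<lambda>_. D)"
  unfolding Sig_def PiE_def Pi_def extensional_def by auto

lemma compact_Sig: "finite D \<Longrightarrow> compact (Sig D)"
proof -
  assume "finite D"
  then have "compactin (product_topology (\<lambda>_. euclidean) UNIV) (PiE UNIV (\<lambda>_. D))"
    by (simp add: compactin_PiE finite_imp_compact)
  then show ?thesis by (simp add: euclidean_product_topology Sig_PiE)
qed

lemma cont_pif:
  assumes "norm lam < 1" "finite D"
  shows "continuous_on (Sig D) (pif lam)"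
proof (rule uniform_limit_theorem)
  have h1: "\<And>n x. x \<in> Sig D \<Longrightarrow> norm (x n * lam ^ n) \<le> Mb D * norm lam ^ n"
  proof -
    fix n and x :: "nat \<Rightarrow> complex" assume "x \<in> Sig D"
    then have "x n \<in> D" by (simp add: Sig_def)
    then have "norm (x n) \<le> Mb D" using Mb_ge assms(2) by blast
    then show "norm (x n * lam ^ n) \<le> Mb D * norm lam ^ n"
      by (simp add: norm_mult norm_power mult_right_mono)
  qed
  have h2: "summable (\<lambda>n. Mb D * norm lam ^ n)"
      using assms by (intro summable_mult summable_geometric) auto
  have "uniform_limit (Sig D) (\<lambda>n x. \<Sum>i<n. x i * lam ^ i) (\<lambda>x. suminf (\<lambda>i. x i * lam ^ i)) sequentially"
    apply (rule Weierstrass_m_test[where f="\<lambda>i x. x i * lam ^ i" and M="\<lambda>n. Mb D * norm lam ^ n" and A="Sig D"])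
     apply (fact h1) apply (fact h2) done
  then show "uniform_limit (Sig D) (\<lambda>n x. \<Sum>i<n. x i * lam ^ i) (pif lam) sequentially"
    unfolding pif_def[abs_def] .
  show "\<forall>\<^sub>F n in sequentially. continuous_on (Sig D) (\<lambda>x. \<Sum>i<n. x i * lam ^ i)"
  proof (rule always_eventually, rule allI)
    fix n
    have "\<And>i. continuous_on (Sig D) (\<lambda>x. x i)"
      by (rule continuous_on_subset[OF continuous_on_product_coordinates], rule subset_UNIV)
    then show "continuous_on (Sig D) (\<lambda>x. \<Sum>i<n. x i * lam ^ i)"
      by (intro continuous_on_sum continuous_on_mult_right, assumption)
  qed
qed (rule trivial_limit_sequentially)

lemma compact_attr:
  assumes "norm lam < 1" "finite D"
  shows "compact (attractor lam D)"
  unfolding attr_eq using compact_continuous_image[OF cont_pif[OF assms] compact_Sig[OF assms(2)]] .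

definition Cyl :: "complex \<Rightarrow> complex set \<Rightarrow> (nat \<Rightarrow> complex) \<Rightarrow> nat \<Rightarrow> complex set" where
  "Cyl lam D a n = {pif lam x | x. x \<in> Sig D \<and> (\<forall>i<n. x i = a i)}"

definition cat :: "nat \<Rightarrow> (nat \<Rightarrow> complex) \<Rightarrow> (nat \<Rightarrow> complex) \<Rightarrow> nat \<Rightarrow> complex" where
  "cat n p y = (\<lambda>i. if i < n then p i else y (i - n))"

lemma cat_Sig: "\<forall>i<n. p i \<in> D \<Longrightarrow> y \<in> Sig D \<Longrightarrow> cat n p y \<in> Sig D"
  unfolding cat_def Sig_def by auto

lemma cat_shift: "(\<lambda>i. cat n p y (i + n)) = y"
  unfolding cat_def by auto

lemma pif_cat:
  assumes "norm lam < 1" "finite D" "\<forall>i<n. p i \<in> D" "y \<in> Sig D"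
  shows "pif lam (cat n p y) = (\<Sum>i<n. p i * lam ^ i) + lam ^ n * pif lam y"
proof -
  have "pif lam (cat n p y) = (\<Sum>i<n. cat n p y i * lam ^ i) + lam ^ n * pif lam (\<lambda>i. cat n p y (i + n))"
    by (rule pif_tail[OF assms(1,2) cat_Sig[OF assms(3,4)]])
  also have "(\<Sum>i<n. cat n p y i * lam ^ i) = (\<Sum>i<n. p i * lam ^ i)"
    by (rule sum.cong) (auto simp: cat_def)
  finally show ?thesis by (simp add: cat_shift)
qed

lemma cyl_image:
  assumes "norm lam < 1" "finite D" "\<forall>i<n. a i \<in> D"
  shows "Cyl lam D a n = (\<lambda>z. (\<Sum>i<n. a i * lam ^ i) + lam ^ n * z) ` attractor lam D"
proof
  show "Cyl lam D a n \<subseteq> (\<lambda>z. (\<Sum>i<n. a i * lam ^ i) + lam ^ n * z) ` attractor lam D"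
  proof
    fix w assume "w \<in> Cyl lam D a n"
    then obtain x where x: "x \<in> Sig D" "\<forall>i<n. x i = a i" "w = pif lam x"
      unfolding Cyl_def by blast
    have "w = (\<Sum>i<n. x i * lam ^ i) + lam ^ n * pif lam (\<lambda>i. x (i + n))"
      using pif_tail[OF assms(1,2) x(1)] x(3) by simp
    also have "(\<Sum>i<n. x i * lam ^ i) = (\<Sum>i<n. a i * lam ^ i)"
      using x(2) by (intro sum.cong) auto
    finally show "w \<in> (\<lambda>z. (\<Sum>i<n. a i * lam ^ i) + lam ^ n * z) ` attractor lam D"
      unfolding attr_eq using shift_Sig[OF x(1)] by blast
  qed
  show "(\<lambda>z. (\<Sum>i<n. a i * lam ^ i) + lam ^ n * z) ` attractor lam D \<subseteq> Cyl lam D a n"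
  proof
    fix w assume "w \<in> (\<lambda>z. (\<Sum>i<n. a i * lam ^ i) + lam ^ n * z) ` attractor lam D"
    then obtain y where y: "y \<in> Sig D" "w = (\<Sum>i<n. a i * lam ^ i) + lam ^ n * pif lam y"
      unfolding attr_eq by blast
    have "w = pif lam (cat n a y)" using pif_cat[OF assms y(1)] y(2) by simp
    moreover have "cat n a y \<in> Sig D" using cat_Sig[OF assms(3) y(1)] .
    moreover have "\<forall>i<n. cat n a y i = a i" by (simp add: cat_def)
    ultimately show "w \<in> Cyl lam D a n" unfolding Cyl_def by blast
  qed
qed

lemma cyl_compact:
  assumes "norm lam < 1" "finite D" "\<forall>i<n. a i \<in> D"
  shows "compact (Cyl lam D a n)"
  unfolding cyl_image[OF assms]
  by (intro compact_continuous_image compact_attr assms continuous_intros)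

lemma cyl_connected:
  assumes "norm lam < 1" "finite D" "\<forall>i<n. a i \<in> D" "connected (attractor lam D)"
  shows "connected (Cyl lam D a n)"
  unfolding cyl_image[OF assms(1-3)]
  by (intro connected_continuous_image assms(4) continuous_intros)

lemma cyl_sub: "Cyl lam D a n \<subseteq> attractor lam D"
  unfolding Cyl_def attr_eq by auto

lemma cyl_nonempty:
  assumes "norm lam < 1" "finite D" "\<forall>i<n. a i \<in> D" "D \<noteq> {}"
  shows "Cyl lam D a n \<noteq> {}"
proof -
  obtain d where "d \<in> D" using assms(4) by blast
  then have "(\<lambda>_. d) \<in> Sig D" by (simp add: Sig_def)
  then show ?thesis unfolding cyl_image[OF assms(1-3)] attr_eq by blast
qed

lemma cyl_mem: "a \<in> Sig D \<Longrightarrow> pif lam a \<in> Cyl lam D a n"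
  unfolding Cyl_def by blast

lemma cyl_restrict: "Cyl lam D a n = Cyl lam D (restrict a {..<n}) n"
  unfolding Cyl_def by auto



lemma delta_exists:
  assumes "norm lam < 1" "finite D" "D \<noteq> {}"
  shows "\<exists>\<delta>>0. \<forall>a\<in>Sig D. \<forall>b\<in>Sig D. Cyl lam D a n \<inter> Cyl lam D b n = {} \<longrightarrow>
            \<delta> \<le> norm (pif lam a - pif lam b)"
proof -
  define W where "W = PiE {..<n} (\<lambda>_. D)"
  have fW: "finite W" unfolding W_def using assms(2) by (simp add: finite_PiE)
  define P where "P = {(w,v). w \<in> W \<and> v \<in> W \<and> Cyl lam D w n \<inter> Cyl lam D v n = {}}"
  have fP: "finite P"
    by (rule finite_subset[of _ "W \<times> W"]) (auto simp: P_def fW)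
  define S where "S = (\<lambda>(w,v). setdist (Cyl lam D w n) (Cyl lam D v n)) ` P"
  have fS: "finite (insert 1 S)" using fP by (simp add: S_def)
  define \<delta> where "\<delta> = Min (insert 1 S)"
  have Wd: "\<forall>i<n. w i \<in> D" if "w \<in> W" for w
    using that by (auto simp: W_def PiE_def Pi_def)
  have pos: "\<forall>s\<in>insert 1 S. 0 < s"
  proof
    fix s assume "s \<in> insert 1 S"
    then consider "s = 1" | w v where "(w,v) \<in> P" "s = setdist (Cyl lam D w n) (Cyl lam D v n)"
      unfolding S_def by auto
    then show "0 < s"
    proof cases
      case 1 then show ?thesis by simp
    next
      case 2
      then have w: "w \<in> W" and v: "v \<in> W" and dj: "Cyl lam D w n \<inter> Cyl lam D v n = {}"
        by (auto simp: P_def)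
      have "compact (Cyl lam D w n)" by (rule cyl_compact[OF assms(1,2) Wd[OF w]])
      moreover have "closed (Cyl lam D v n)"
        by (rule compact_imp_closed, rule cyl_compact[OF assms(1,2) Wd[OF v]])
      moreover have "Cyl lam D w n \<noteq> {}" by (rule cyl_nonempty[OF assms(1,2) Wd[OF w] assms(3)])
      moreover have "Cyl lam D v n \<noteq> {}" by (rule cyl_nonempty[OF assms(1,2) Wd[OF v] assms(3)])
      ultimately show ?thesis using 2(2) dj setdist_gt_0_compact_closed by blast
    qed
  qed
  have dpos: "0 < \<delta>" unfolding \<delta>_def using Min_gr_iff[OF fS] pos by blast
  show ?thesis
  proof (intro exI conjI ballI impI)
    show "0 < \<delta>" by (rule dpos)
    fix a b assume a: "a \<in> Sig D" and b: "b \<in> Sig D"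
      and dj: "Cyl lam D a n \<inter> Cyl lam D b n = {}"
    define w where "w = restrict a {..<n}"
    define v where "v = restrict b {..<n}"
    have wW: "w \<in> W" using a unfolding w_def W_def Sig_def by auto
    have vW: "v \<in> W" using b unfolding v_def W_def Sig_def by auto
    have cw: "Cyl lam D a n = Cyl lam D w n" unfolding w_def by (rule cyl_restrict)
    have cv: "Cyl lam D b n = Cyl lam D v n" unfolding v_def by (rule cyl_restrict)
    have "(w,v) \<in> P" using wW vW dj cw cv by (simp add: P_def)
    then have "setdist (Cyl lam D w n) (Cyl lam D v n) \<in> insert 1 S" unfolding S_def by force
    then have "\<delta> \<le> setdist (Cyl lam D w n) (Cyl lam D v n)" unfolding \<delta>_def using fS by simp
    also have "\<dots> \<le> dist (pif lam a) (pif lam b)"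
      using cyl_mem[OF a, of lam n] cyl_mem[OF b, of lam n] cw cv setdist_le_dist by metis
    finally show "\<delta> \<le> norm (pif lam a - pif lam b)" by (simp add: dist_norm)
  qed
qed



definition PairC :: "complex \<Rightarrow> complex set \<Rightarrow> (nat \<Rightarrow> complex) \<Rightarrow> (nat \<Rightarrow> complex) \<Rightarrow> nat \<Rightarrow> bool" where
  "PairC lam D a b L \<longleftrightarrow> (\<exists>x y. x \<in> Sig D \<and> y \<in> Sig D \<and> (\<forall>i<L. x i = a i \<and> y i = b i) \<and> pif lam x = pif lam y)"

lemma Pair_mono: "PairC lam D a b L \<Longrightarrow> L' \<le> L \<Longrightarrow> PairC lam D a b L'"
  unfolding PairC_def by (meson less_le_trans)

lemma ps_eval_diff:
  assumes "norm lam < 1" "finite D" "x \<in> Sig D" "y \<in> Sig D"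
  shows "ps_eval (\<lambda>i. x i - y i) lam = pif lam x - pif lam y"
proof -
  have "ps_eval (\<lambda>i. x i - y i) lam = (\<Sum>i. x i * lam ^ i - y i * lam ^ i)"
    unfolding ps_eval_def by (simp add: algebra_simps)
  also have "\<dots> = pif lam x - pif lam y"
    unfolding pif_def by (rule suminf_diff[OF summ[OF assms(1,2,3)] summ[OF assms(1,2,4)], symmetric])
  finally show ?thesis .
qed

lemma diff_classB:
  assumes "x \<in> Sig D" "y \<in> Sig D" "x 0 \<noteq> y 0"
  shows "(\<lambda>i. x i - y i) \<in> classB D"
  using assms unfolding classB_def Sig_def by auto

lemma main_bound:
  assumes lam: "norm lam < 1" and fD: "finite D"
    and C1: "C1 > 0"
    and H: "\<forall>n \<ge> N. \<forall>f \<in> classF lam D. \<forall>g \<in> classB D.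
           common_deg f g = enat n \<longrightarrow> norm (ps_eval g lam) \<ge> C1 * norm lam ^ n"
    and dl: "\<delta> > 0" "\<forall>a\<in>Sig D. \<forall>b\<in>Sig D. Cyl lam D a (Suc N) \<inter> Cyl lam D b (Suc N) = {} \<longrightarrow>
            \<delta> \<le> norm (pif lam a - pif lam b)"
    and a: "a \<in> Sig D" and b: "b \<in> Sig D" and ab0: "a 0 \<noteq> b 0"
    and PL: "PairC lam D a b L" and nPL: "\<not> PairC lam D a b (Suc L)"
  shows "min \<delta> C1 * norm lam ^ L \<le> norm (pif lam a - pif lam b)"
proof (cases "L \<le> N")
  case True
  have "\<not> PairC lam D a b (Suc N)" using nPL Pair_mono True by (meson Suc_le_mono)
  then have "Cyl lam D a (Suc N) \<inter> Cyl lam D b (Suc N) = {}"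
    unfolding PairC_def Cyl_def by blast
  then have "\<delta> \<le> norm (pif lam a - pif lam b)" using dl(2) a b by blast
  moreover have "min \<delta> C1 * norm lam ^ L \<le> \<delta>"
  proof -
    have "norm lam ^ L \<le> 1" using lam by (simp add: power_le_one)
    then have "min \<delta> C1 * norm lam ^ L \<le> min \<delta> C1 * 1"
      using dl(1) C1 by (intro mult_left_mono) auto
    then show ?thesis by simp
  qed
  ultimately show ?thesis by linarith
next
  case False
  then have L1: "L \<ge> 1" by simp
  obtain \<alpha> \<beta> where ab: "\<alpha> \<in> Sig D" "\<beta> \<in> Sig D" "\<forall>i<L. \<alpha> i = a i \<and> \<beta> i = b i"
      "pif lam \<alpha> = pif lam \<beta>"
    using PL unfolding PairC_def by blast
  define f where "f = (\<lambda>i. \<alpha> i - \<beta> i)"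
  define g where "g = (\<lambda>i. a i - b i)"
  have f0: "f 0 = g 0" using ab(3) L1 by (simp add: f_def g_def)
  have fB: "f \<in> classB D" unfolding f_def
    by (rule diff_classB[OF ab(1,2)]) (use ab(3) L1 ab0 in auto)
  have fev: "ps_eval f lam = 0" unfolding f_def using ps_eval_diff[OF lam fD ab(1,2)] ab(4) by simp
  have fF: "f \<in> classF lam D" using fB fev by (simp add: classF_def)
  have gB: "g \<in> classB D" unfolding g_def by (rule diff_classB[OF a b ab0])
  have gev: "ps_eval g lam = pif lam a - pif lam b" unfolding g_def by (rule ps_eval_diff[OF lam fD a b])
  have ex: "\<exists>k. f (Suc k) \<noteq> g (Suc k)"
  proof (rule ccontr)
    assume "\<not> ?thesis"
    then have "\<forall>i. f i = g i" using f0 by (metis not0_implies_Suc)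
    then have "f = g" by auto
    then have "pif lam a = pif lam b" using fev gev by simp
    then have "PairC lam D a b (Suc L)" unfolding PairC_def using a b by blast
    then show False using nPL by blast
  qed
  define m where "m = (LEAST k. f (Suc k) \<noteq> g (Suc k))"
  have fm: "f (Suc m) \<noteq> g (Suc m)" unfolding m_def using LeastI_ex[OF ex] .
  have agree: "\<forall>i\<le>m. f i = g i"
  proof (intro allI impI)
    fix i assume "i \<le> m"
    show "f i = g i"
    proof (cases i)
      case 0 then show ?thesis using f0 by simp
    next
      case (Suc k)
      then have "k < m" using \<open>i \<le> m\<close> by simp
      then show ?thesis using not_less_Least[of k "\<lambda>k. f (Suc k) \<noteq> g (Suc k)"] Suc
        unfolding m_def by blast
    qed
  qed
  have cd: "common_deg f g = enat m" unfolding common_deg_def m_def using ex by simp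
  have mge: "L \<le> Suc m"
  proof (rule ccontr)
    assume "\<not> L \<le> Suc m"
    then have "Suc m < L" by simp
    then have "f (Suc m) = g (Suc m)" using ab(3) by (simp add: f_def g_def)
    then show False using fm by simp
  qed
  have mle: "m < L"
  proof (rule ccontr)
    assume "\<not> m < L"
    then have Lm: "L \<le> m" by simp
    define \<alpha>' where "\<alpha>' = (\<lambda>i. if i \<le> m then a i else \<alpha> i)"
    define \<beta>' where "\<beta>' = (\<lambda>i. if i \<le> m then b i else \<beta> i)"
    have s1: "\<alpha>' \<in> Sig D" using a ab(1) by (auto simp: \<alpha>'_def Sig_def)
    have s2: "\<beta>' \<in> Sig D" using b ab(2) by (auto simp: \<beta>'_def Sig_def)
    have "(\<lambda>i. \<alpha>' i - \<beta>' i) = f"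
    proof
      fix i show "\<alpha>' i - \<beta>' i = f i"
        using agree by (cases "i \<le> m") (auto simp: \<alpha>'_def \<beta>'_def f_def g_def)
    qed
    then have "pif lam \<alpha>' - pif lam \<beta>' = 0" using ps_eval_diff[OF lam fD s1 s2] fev by simp
    moreover have "\<forall>i<Suc L. \<alpha>' i = a i \<and> \<beta>' i = b i" using Lm by (simp add: \<alpha>'_def \<beta>'_def)
    ultimately have "PairC lam D a b (Suc L)" unfolding PairC_def using s1 s2 by force
    then show False using nPL by blast
  qed
  have mN: "m \<ge> N" using mge False by simp
  have "C1 * norm lam ^ m \<le> norm (ps_eval g lam)" using H mN fF gB cd by blast
  moreover have "min \<delta> C1 * norm lam ^ L \<le> C1 * norm lam ^ m"
  proof -
    have "norm lam ^ L \<le> norm lam ^ m" using lam mle by (intro power_decreasing) auto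
    then have "min \<delta> C1 * norm lam ^ L \<le> min \<delta> C1 * norm lam ^ m"
      using dl(1) C1 by (intro mult_left_mono) auto
    also have "\<dots> \<le> C1 * norm lam ^ m" by (intro mult_right_mono) auto
    finally show ?thesis .
  qed
  ultimately show ?thesis using gev by simp
qed



lemma Kb_nonneg: "norm lam < 1 \<Longrightarrow> finite D \<Longrightarrow> 0 \<le> Kb D lam"
  unfolding Kb_def using Mb_nonneg[of D] by simp

lemma cyl_close:
  assumes "norm lam < 1" "finite D" "u \<in> Cyl lam D a k" "w \<in> Sig D" "\<forall>i<k. w i = a i"
  shows "norm (u - pif lam w) \<le> Kb D lam * norm lam ^ k"
proof -
  obtain x where x: "x \<in> Sig D" "\<forall>i<k. x i = a i" "u = pif lam x"
    using assms(3) unfolding Cyl_def by blast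
  show ?thesis using pif_agree[OF assms(1,2) x(1) assms(4)] x(2,3) assms(5) by simp
qed

lemma shift_diff:
  assumes "norm lam < 1" "finite D" "a \<in> Sig D" "b \<in> Sig D" "\<forall>i<j. a i = b i"
  shows "pif lam a - pif lam b = lam ^ j * (pif lam (\<lambda>i. a (i + j)) - pif lam (\<lambda>i. b (i + j)))"
proof -
  have "(\<Sum>i<j. a i * lam ^ i) = (\<Sum>i<j. b i * lam ^ i)" using assms(5) by (intro sum.cong) auto
  then show ?thesis using pif_tail[OF assms(1,2,3), of j] pif_tail[OF assms(1,2,4), of j]
    by (simp add: algebra_simps)
qed

lemma all_pair_eq:
  assumes lam: "norm lam < 1" and fD: "finite D" and a: "a \<in> Sig D" and b: "b \<in> Sig D"
    and P: "\<forall>L. PairC lam D a b L"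
  shows "pif lam a = pif lam b"
proof (rule ccontr)
  assume ne: "pif lam a \<noteq> pif lam b"
  define t where "t = norm (pif lam a - pif lam b)"
  have t: "t > 0" using ne by (simp add: t_def)
  define K where "K = Kb D lam"
  have K: "K \<ge> 0" using Kb_nonneg[OF lam fD] by (simp add: K_def)
  obtain L where L: "norm lam ^ L < t / (2 * K + 1)"
    using real_arch_pow_inv[of "t / (2 * K + 1)" "norm lam"] t K lam by auto
  obtain x y where xy: "x \<in> Sig D" "y \<in> Sig D" "\<forall>i<L. x i = a i \<and> y i = b i" "pif lam x = pif lam y"
    using P unfolding PairC_def by blast
  have 1: "norm (pif lam a - pif lam x) \<le> K * norm lam ^ L"
    unfolding K_def by (rule pif_agree[OF lam fD a xy(1)]) (use xy(3) in auto)
  have 2: "norm (pif lam y - pif lam b) \<le> K * norm lam ^ L"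
    unfolding K_def by (rule pif_agree[OF lam fD xy(2) b]) (use xy(3) in auto)
  have "t \<le> norm (pif lam a - pif lam x) + norm (pif lam y - pif lam b)"
    unfolding t_def using xy(4) norm_triangle_ineq[of "pif lam a - pif lam x" "pif lam y - pif lam b"]
    by simp
  also have "\<dots> \<le> 2 * K * norm lam ^ L" using 1 2 by simp
  also have "\<dots> \<le> (2 * K + 1) * norm lam ^ L" by (simp add: mult_right_mono)
  also have "\<dots> < t" using L K by (simp add: field_simps)
  finally show False by simp
qed

theorem theorem6p1:
  fixes m :: nat and lam :: complex and D :: "complex set"
  assumes "m \<ge> 2"
    and "norm lam < 1"
    and "finite D" and "card D = m"
    and "connected (attractor lam D)"
    and "finite (overlap_set lam D)"
    and "\<exists>C1 > 0. \<exists>N. \<forall>n \<ge> N. \<forall>f \<in> classF lam D. \<forall>g \<in> classB D.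
           common_deg f g = enat n \<longrightarrow> norm (ps_eval g lam) \<ge> C1 * norm lam ^ n"
  shows "bounded_turning (attractor lam D)"
proof -
  have lam: "norm lam < 1" and fD: "finite D" and conn: "connected (attractor lam D)" using assms by auto
  have Dne: "D \<noteq> {}" using assms(1,4) by auto
  obtain C1 N where C1: "C1 > 0" and H: "\<forall>n \<ge> N. \<forall>f \<in> classF lam D. \<forall>g \<in> classB D.
           common_deg f g = enat n \<longrightarrow> norm (ps_eval g lam) \<ge> C1 * norm lam ^ n"
    using assms(7) by blast
  obtain \<delta> where dl: "\<delta> > 0" "\<forall>a\<in>Sig D. \<forall>b\<in>Sig D. Cyl lam D a (Suc N) \<inter> Cyl lam D b (Suc N) = {} \<longrightarrow>
            \<delta> \<le> norm (pif lam a - pif lam b)"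
    using delta_exists[OF lam fD Dne, of "Suc N"] by blast
  define c where "c = min \<delta> C1"
  have c: "c > 0" using dl(1) C1 by (simp add: c_def)
  define K where "K = Kb D lam"
  have K: "K \<ge> 0" using Kb_nonneg[OF lam fD] by (simp add: K_def)
  define LB where "LB = 2 * K / c"
  show ?thesis unfolding bounded_turning_def
  proof (intro conjI conn exI[of _ LB] ballI)
    fix z0 z1 assume z0: "z0 \<in> attractor lam D" and z1: "z1 \<in> attractor lam D"
    show "\<exists>C. C \<subseteq> attractor lam D \<and> connected C \<and> z0 \<in> C \<and> z1 \<in> C \<and> diameter C \<le> LB * dist z0 z1"
    proof (cases "z0 = z1")
      case True
      then show ?thesis using z0 by (intro exI[of _ "{z0}"]) auto
    next
      case False
      obtain a where a: "a \<in> Sig D" "z0 = pif lam a" using z0 unfolding attr_eq by blast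
      obtain b where b: "b \<in> Sig D" "z1 = pif lam b" using z1 unfolding attr_eq by blast
      have "a \<noteq> b" using False a b by blast
      then have exj: "\<exists>i. a i \<noteq> b i" by auto
      define j where "j = (LEAST i. a i \<noteq> b i)"
      have aj: "a j \<noteq> b j" unfolding j_def using LeastI_ex[OF exj] .
      have bel: "\<forall>i<j. a i = b i" unfolding j_def using not_less_Least by blast
      define a' where "a' = (\<lambda>i. a (i + j))"
      define b' where "b' = (\<lambda>i. b (i + j))"
      have a': "a' \<in> Sig D" unfolding a'_def by (rule shift_Sig[OF a(1)])
      have b': "b' \<in> Sig D" unfolding b'_def by (rule shift_Sig[OF b(1)])
      have ab0: "a' 0 \<noteq> b' 0" using aj by (simp add: a'_def b'_def)
      have eqd: "pif lam a - pif lam b = lam ^ j * (pif lam a' - pif lam b')"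
        unfolding a'_def b'_def by (rule shift_diff[OF lam fD a(1) b(1) bel])
      have exL: "\<exists>L. \<not> PairC lam D a' b' L"
      proof (rule ccontr)
        assume "\<not> ?thesis"
        then have "pif lam a' = pif lam b'" using all_pair_eq[OF lam fD a' b'] by blast
        then have "z0 = z1" using eqd a b by simp
        then show False using False by simp
      qed
      define L0 where "L0 = (LEAST L. \<not> PairC lam D a' b' L)"
      have nP0: "\<not> PairC lam D a' b' L0" unfolding L0_def using LeastI_ex[OF exL] .
      have P0: "PairC lam D a' b' 0" unfolding PairC_def using a' by blast
      have "L0 \<noteq> 0"
      proof
        assume "L0 = 0" then show False using nP0 P0 by simp
      qed
      then obtain L where L0L: "L0 = Suc L" by (cases L0) auto
      have PL: "PairC lam D a' b' L"
        using not_less_Least[of L "\<lambda>L. \<not> PairC lam D a' b' L"] L0L unfolding L0_def by auto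
      have nPL: "\<not> PairC lam D a' b' (Suc L)" using nP0 L0L by simp
      have bound: "c * norm lam ^ L \<le> norm (pif lam a' - pif lam b')"
        unfolding c_def by (rule main_bound[OF lam fD C1 H dl a' b' ab0 PL nPL])
      obtain x' y' where xy: "x' \<in> Sig D" "y' \<in> Sig D" "\<forall>i<L. x' i = a' i \<and> y' i = b' i"
          "pif lam x' = pif lam y'"
        using PL unfolding PairC_def by blast
      have aD: "\<forall>i<j. a i \<in> D" using a(1) by (simp add: Sig_def)
      define x where "x = cat j a x'"
      define y where "y = cat j a y'"
      have xS: "x \<in> Sig D" unfolding x_def by (rule cat_Sig[OF aD xy(1)])
      have yS: "y \<in> Sig D" unfolding y_def by (rule cat_Sig[OF aD xy(2)])
      have pxy: "pif lam x = pif lam y"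
        unfolding x_def y_def using pif_cat[OF lam fD aD xy(1)] pif_cat[OF lam fD aD xy(2)] xy(4) by simp
      have xa: "\<forall>i<j + L. x i = a i"
      proof (intro allI impI)
        fix i assume "i < j + L"
        then show "x i = a i" using xy(3) by (cases "i < j") (auto simp: x_def cat_def a'_def)
      qed
      have yb: "\<forall>i<j + L. y i = b i"
      proof (intro allI impI)
        fix i assume "i < j + L"
        then show "y i = b i" using xy(3) bel by (cases "i < j") (auto simp: y_def cat_def b'_def)
      qed
      define k where "k = j + L"
      define C where "C = Cyl lam D a k \<union> Cyl lam D b k"
      have px1: "pif lam x \<in> Cyl lam D a k" using xS xa unfolding Cyl_def k_def by blast
      have px2: "pif lam x \<in> Cyl lam D b k" using yS yb pxy unfolding Cyl_def k_def by force
      have aD': "\<forall>i<k. a i \<in> D" using a(1) by (simp add: Sig_def)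
      have bD': "\<forall>i<k. b i \<in> D" using b(1) by (simp add: Sig_def)
      have Cconn: "connected C" unfolding C_def
        by (rule connected_Un[OF cyl_connected[OF lam fD aD' conn] cyl_connected[OF lam fD bD' conn]])
          (use px1 px2 in blast)
      have Csub: "C \<subseteq> attractor lam D" unfolding C_def using cyl_sub by blast
      have z0C: "z0 \<in> C" unfolding C_def using cyl_mem[OF a(1)] a(2) by blast
      have z1C: "z1 \<in> C" unfolding C_def using cyl_mem[OF b(1)] b(2) by blast
      have near: "norm (u - pif lam x) \<le> K * norm lam ^ k" if "u \<in> C" for u
      proof -
        from that consider "u \<in> Cyl lam D a k" | "u \<in> Cyl lam D b k" unfolding C_def by blast
        then show ?thesis
        proof cases
          case 1 then show ?thesis unfolding K_def using cyl_close[OF lam fD 1 xS] xa k_def by simp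
        next
          case 2 then show ?thesis unfolding K_def using cyl_close[OF lam fD 2 yS] yb k_def pxy by simp
        qed
      qed
      have diam: "diameter C \<le> 2 * K * norm lam ^ k"
      proof (rule diameter_le)
        show "C \<noteq> {} \<or> 0 \<le> 2 * K * norm lam ^ k" using z0C by blast
        fix u v assume "u \<in> C" "v \<in> C"
        then have "norm (u - pif lam x) \<le> K * norm lam ^ k" "norm (v - pif lam x) \<le> K * norm lam ^ k"
          using near by auto
        moreover have "norm (u - v) \<le> norm (u - pif lam x) + norm (v - pif lam x)"
          using norm_triangle_ineq4[of "u - pif lam x" "v - pif lam x"] by simp
        ultimately show "norm (u - v) \<le> 2 * K * norm lam ^ k" by simp
      qed
      have "2 * K * norm lam ^ k = (2 * K / c) * (c * norm lam ^ j * norm lam ^ L)"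
        using c by (simp add: k_def power_add field_simps)
      also have "\<dots> \<le> (2 * K / c) * (norm lam ^ j * norm (pif lam a' - pif lam b'))"
      proof (rule mult_left_mono)
        have "norm lam ^ j * (c * norm lam ^ L) \<le> norm lam ^ j * norm (pif lam a' - pif lam b')"
          using bound by (rule mult_left_mono) simp
        then show "c * norm lam ^ j * norm lam ^ L \<le> norm lam ^ j * norm (pif lam a' - pif lam b')"
          by (simp add: mult_ac)
        show "0 \<le> 2 * K / c" using K c by simp
      qed
      also have "norm lam ^ j * norm (pif lam a' - pif lam b') = dist z0 z1"
        using eqd a(2) b(2) by (simp add: dist_norm norm_mult norm_power)
      finally have "diameter C \<le> LB * dist z0 z1" using diam unfolding LB_def by linarith
      then show ?thesis using Csub Cconn z0C z1C by blast
    qed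
  qed
qed


end
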